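(* For all $2$-admissible integers $n > 1$, any partial $2$-star design of order $n$ with $n-3$ stars is completable.
   Context: A $2$-star is a copy of $K_{1,2}$ (a path with two edges). A partial $2$-star design of order $n$ is a pair $(V,\mathcal{A})$ where $V$ is a set of $n$ vertices and $\mathcal{A}$ is a set of edge-disjoint $2$-stars that are subgraphs of the complete graph $K_V$; it is completable if there is a set $\mathcal{B}\supseteq\mathcal{A}$ of edge-disjoint $2$-stars in $K_V$ whose edges cover all edges of $K_V$. A positive integer $n$ is $2$-admissible if $\binom{n}{2}$ is even. *)

theory Defs
  imports Main
begin

definition complete_edges :: "'a set \<Rightarrow> 'a set set" where
  "complete_edges V = {e. \<exists>x y. x \<in> V \<and> y \<in> V \<and> x \<noteq> y \<and> e = {x, y}}"

definition two_star :: "'a set set \<Rightarrow> bool" where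
  "two_star S \<longleftrightarrow> (\<exists>a b c. distinct [a, b, c] \<and> S = {{c, a}, {c, b}})"

definition edge_disjoint_stars :: "'a set \<Rightarrow> 'a set set set \<Rightarrow> bool" where
  "edge_disjoint_stars V A \<longleftrightarrow>
     (\<forall>S\<in>A. two_star S \<and> S \<subseteq> complete_edges V) \<and>
     (\<forall>S\<in>A. \<forall>T\<in>A. S \<noteq> T \<longrightarrow> S \<inter> T = {})"

definition partial_2star_design :: "'a set \<Rightarrow> 'a set set set \<Rightarrow> bool" where
  "partial_2star_design V A \<longleftrightarrow> finite V \<and> edge_disjoint_stars V A"

definition completable :: "'a set \<Rightarrow> 'a set set set \<Rightarrow> bool" where
  "completable V A \<longleftrightarrow>
     (\<exists>B. A \<subseteq> B \<and> edge_disjoint_stars V B \<and> \<Union>B = complete_edges V)"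

definition two_admissible :: "nat \<Rightarrow> bool" where
  "two_admissible n \<longleftrightarrow> n > 0 \<and> even (n choose 2)"

end

theory Submission
  imports Defs
begin

definition dstars :: "'a set set set \<Rightarrow> bool" where
  "dstars B \<longleftrightarrow> (\<forall>S\<in>B. two_star S) \<and> (\<forall>S\<in>B. \<forall>T\<in>B. S \<noteq> T \<longrightarrow> S \<inter> T = {})"

lemma two_star_card: "two_star S \<Longrightarrow> card S = 2"
  unfolding two_star_def by (auto simp: doubleton_eq_iff card_insert_if)

lemma dstars_card:
  assumes "dstars B" "finite (\<Union>B)"
  shows "card (\<Union>B) = 2 * card B"
proof -
  have fB: "finite B" using assms(2) by (rule finite_UnionD)
  have "card (\<Union>B) = sum card B"
    by (rule card_Union_disjoint)
       (use assms in \<open>auto simp: dstars_def pairwise_def disjnt_def intro: finite_subset\<close>)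
  also have "\<dots> = (\<Sum>S\<in>B. 2)"
    using assms(1) by (intro sum.cong) (auto simp: dstars_def two_star_card)
  finally show ?thesis by simp
qed

lemma dstars_Un:
  assumes d1: "dstars B1" and d2: "dstars B2" and dj: "\<Union>B1 \<inter> \<Union>B2 = {}"
  shows "dstars (B1 \<union> B2)"
  unfolding dstars_def
proof (intro conjI ballI impI)
  fix S assume "S \<in> B1 \<union> B2" then show "two_star S" using d1 d2 by (auto simp: dstars_def)
next
  fix S T assume S: "S \<in> B1 \<union> B2" and T: "T \<in> B1 \<union> B2" and ne: "S \<noteq> T"
  show "S \<inter> T = {}"
  proof (cases "S \<in> B1")
    case True
    show ?thesis
    proof (cases "T \<in> B1")
      case True2: True
      then show ?thesis using True ne d1 by (simp add: dstars_def)
    next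
      case False
      then have "T \<in> B2" using T by simp
      then have "S \<inter> T \<subseteq> \<Union>B1 \<inter> \<Union>B2" using True by blast
      then show ?thesis using dj by blast
    qed
  next
    case False
    then have S2: "S \<in> B2" using S by simp
    show ?thesis
    proof (cases "T \<in> B2")
      case True
      then show ?thesis using S2 ne d2 by (simp add: dstars_def)
    next
      case False
      then have "T \<in> B1" using T by simp
      then have "S \<inter> T \<subseteq> \<Union>B1 \<inter> \<Union>B2" using S2 by blast
      then show ?thesis using dj by blast
    qed
  qed
qed

lemma pair_even:
  "finite E \<Longrightarrow> even (card E) \<Longrightarrow> \<forall>e\<in>E. \<exists>a. a \<noteq> v \<and> e = {v,a} \<Longrightarrow> \<exists>B. dstars B \<and> \<Union>B = E"
proof (induction "card E" arbitrary: E rule: less_induct)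
  case less
  show ?case
  proof (cases "E = {}")
    case True then show ?thesis by (intro exI[of _ "{}"]) (auto simp: dstars_def)
  next
    case False
    then obtain e1 where e1: "e1 \<in> E" by auto
    have "card E \<noteq> 0" using False less.prems(1) by simp
    with less.prems(2) have "card E \<ge> 2" by presburger
    then have "card (E - {e1}) \<noteq> 0" using e1 less.prems(1) by simp
    then have "E - {e1} \<noteq> {}" by (metis card.empty)
    then obtain e2 where e2: "e2 \<in> E" "e2 \<noteq> e1" by blast
    obtain a where a: "a \<noteq> v" "e1 = {v,a}" using less.prems(3) e1 by blast
    obtain b where b: "b \<noteq> v" "e2 = {v,b}" using less.prems(3) e2 by blast
    have ab: "a \<noteq> b" using e2 a b by auto
    let ?S = "{e1,e2}"
    have st: "two_star ?S" unfolding two_star_def using a b ab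
      by (intro exI[of _ a] exI[of _ b] exI[of _ v]) auto
    have c: "card (E - ?S) < card E" using less.prems(1) e1 e2 by (intro psubset_card_mono) auto
    have "card (E - ?S) = card E - 2"
      using e1 e2 less.prems(1) by (subst card_Diff_subset) auto
    then have ev: "even (card (E - ?S))" using less.prems(2) \<open>card E \<ge> 2\<close> by presburger
    have fE: "finite (E - ?S)" using less.prems(1) by simp
    have fo: "\<forall>e\<in>E - ?S. \<exists>a. a \<noteq> v \<and> e = {v,a}" using less.prems(3) by blast
    obtain B0 where B0: "dstars B0" "\<Union>B0 = E - ?S"
      using less.hyps[OF c fE ev fo] by blast
    have disj: "\<forall>T\<in>B0. ?S \<inter> T = {}"
    proof
      fix T assume "T \<in> B0"
      then have "T \<subseteq> E - ?S" using B0(2) by blast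
      then show "?S \<inter> T = {}" by blast
    qed
    have "dstars (insert ?S B0)"
      unfolding dstars_def
    proof (intro conjI ballI impI)
      fix S assume "S \<in> insert ?S B0" then show "two_star S" using st B0(1) by (auto simp: dstars_def)
    next
      fix S T assume "S \<in> insert ?S B0" "T \<in> insert ?S B0" "S \<noteq> T"
      then show "S \<inter> T = {}" using disj B0(1) unfolding dstars_def by (metis Int_commute insert_iff)
    qed
    moreover have "\<Union>(insert ?S B0) = E" using B0 e1 e2 by auto
    ultimately show ?thesis by blast
  qed
qed

fun ordp :: "'a set set \<Rightarrow> 'a list \<Rightarrow> bool" where
  "ordp G [] = True"
| "ordp G (v # vs) = ((vs \<noteq> [] \<longrightarrow> (\<exists>p\<in>set vs. {v,p} \<in> G)) \<and> ordp G vs)"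

lemma ordp_mono:
  "ordp G vs \<Longrightarrow> (\<And>x y. x \<in> set vs \<Longrightarrow> y \<in> set vs \<Longrightarrow> {x,y} \<in> G \<Longrightarrow> {x,y} \<in> G') \<Longrightarrow> ordp G' vs"
  by (induction vs) fastforce+


lemma main_decomp:
  "distinct vs \<Longrightarrow> finite G \<Longrightarrow> (\<forall>e\<in>G. \<exists>x y. x \<noteq> y \<and> e = {x,y}) \<Longrightarrow>
   (\<forall>e\<in>G. e \<inter> set vs \<noteq> {}) \<Longrightarrow> ordp G vs \<Longrightarrow>
   \<exists>B. dstars B \<and> \<Union>B \<subseteq> G \<and> card (G - \<Union>B) \<le> 1"
proof (induction vs arbitrary: G)
  case Nil
  then have "G = {}" by auto
  then show ?case by (intro exI[of _ "{}"]) (auto simp: dstars_def)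
next
  case (Cons v vs)
  define Gv where "Gv = {e\<in>G. v \<in> e}"
  have Gv_form: "\<forall>e\<in>Gv. \<exists>a. a \<noteq> v \<and> e = {v,a}"
  proof
    fix e assume "e \<in> Gv"
    then obtain x y where "x \<noteq> y" "e = {x,y}" "v \<in> e" using Cons.prems(3) by (auto simp: Gv_def)
    then show "\<exists>a. a \<noteq> v \<and> e = {v,a}" by (metis empty_iff insert_commute insert_iff)
  qed
  have fGv: "finite Gv" using Cons.prems(2) by (auto simp: Gv_def)
  show ?case
  proof (cases "vs = []")
    case True
    then have GG: "G = Gv" using Cons.prems(4) by (auto simp: Gv_def)
    show ?thesis
    proof (cases "even (card Gv)")
      case True
      from pair_even[OF fGv True Gv_form] obtain B where "dstars B" "\<Union>B = Gv" by blast
      moreover have "card (G - \<Union>B) \<le> 1" using GG \<open>\<Union>B = Gv\<close> by simp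
      ultimately show ?thesis using GG by blast
    next
      case False
      then have "Gv \<noteq> {}" by auto
      then obtain e where e: "e \<in> Gv" by auto
      have ev1: "even (card (Gv - {e}))" using False e fGv
        by (simp add: card_Diff_singleton)
      have fv1: "finite (Gv - {e})" using fGv by simp
      have "\<forall>e'\<in>Gv - {e}. \<exists>a. a \<noteq> v \<and> e' = {v,a}" using Gv_form by blast
      from pair_even[OF fv1 ev1 this] obtain B where B: "dstars B" "\<Union>B = Gv - {e}" by blast
      have sub1: "G - \<Union>B \<subseteq> {e}" using B GG by auto
      have "card (G - \<Union>B) \<le> card {e}" using card_mono[OF _ sub1] by simp
      then have "card (G - \<Union>B) \<le> 1" by simp
      moreover have "\<Union>B \<subseteq> G" using B GG by auto
      ultimately show ?thesis using B(1) by blast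
    qed
  next
    case False
    from Cons.prems(5) False obtain p where p: "p \<in> set vs" "{v,p} \<in> G" by auto
    have vnot: "v \<notin> set vs" using Cons.prems(1) by auto
    have vpGv: "{v,p} \<in> Gv" using p by (auto simp: Gv_def)
    define E where "E = (if even (card Gv) then Gv else Gv - {{v,p}})"
    have E_sub: "E \<subseteq> Gv" by (auto simp: E_def)
    have fE: "finite E" using E_sub fGv finite_subset by blast
    have evE: "even (card E)"
    proof (cases "even (card Gv)")
      case True then show ?thesis by (simp add: E_def)
    next
      case False
      then have "card Gv \<ge> 1" by (metis One_nat_def dvd_0_right not_less_eq_eq le0 less_one linorder_not_le)
      then show ?thesis using False vpGv fGv by (simp add: E_def card_Diff_singleton)
    qed
    have "\<forall>e\<in>E. \<exists>a. a \<noteq> v \<and> e = {v,a}" using Gv_form E_sub by blast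
    then obtain BE where BE: "dstars BE" "\<Union>BE = E"
      using pair_even[OF fE evE] by blast
    define G' where "G' = G - E"
    have rest: "Gv - E \<subseteq> {{v,p}}" by (auto simp: E_def)
    have meets: "\<forall>e\<in>G'. e \<inter> set vs \<noteq> {}"
    proof
      fix e assume e: "e \<in> G'"
      show "e \<inter> set vs \<noteq> {}"
      proof (cases "v \<in> e")
        case True
        then have "e \<in> Gv - E" using e by (auto simp: G'_def Gv_def)
        then have "e = {v,p}" using rest by auto
        then show ?thesis using p by auto
      next
        case False
        then show ?thesis using e Cons.prems(4) by (auto simp: G'_def)
      qed
    qed
    have ord': "ordp G' vs"
    proof (rule ordp_mono)
      show "ordp G vs" using Cons.prems(5) by simp
    next
      fix x y assume "x \<in> set vs" "y \<in> set vs" "{x,y} \<in> G"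
      moreover have "{x,y} \<notin> E" using E_sub vnot \<open>x \<in> set vs\<close> \<open>y \<in> set vs\<close> by (auto simp: Gv_def)
      ultimately show "{x,y} \<in> G'" by (auto simp: G'_def)
    qed
    have "\<exists>B'. dstars B' \<and> \<Union>B' \<subseteq> G' \<and> card (G' - \<Union>B') \<le> 1"
    proof (rule Cons.IH)
      show "distinct vs" using Cons.prems(1) by simp
      show "finite G'" using Cons.prems(2) by (simp add: G'_def)
      show "\<forall>e\<in>G'. \<exists>x y. x \<noteq> y \<and> e = {x,y}" using Cons.prems(3) unfolding G'_def by blast
    qed (use meets ord' in auto)
    then obtain B' where B': "dstars B'" "\<Union>B' \<subseteq> G'" "card (G' - \<Union>B') \<le> 1" by blast
    have "dstars (BE \<union> B')" using BE B' by (intro dstars_Un) (auto simp: G'_def)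
    moreover have "\<Union>(BE \<union> B') \<subseteq> G" using BE B' E_sub by (auto simp: G'_def Gv_def)
    moreover have "G - \<Union>(BE \<union> B') = G' - \<Union>B'" using BE by (auto simp: G'_def)
    ultimately show ?thesis using B'(3) by (intro exI[of _ "BE \<union> B'"]) simp
  qed
qed

lemma ord_exists:
  assumes "finite W" "r \<in> W"
    and cut: "\<forall>S. r \<in> S \<and> S \<subseteq> W \<and> S \<noteq> W \<longrightarrow> (\<exists>u\<in>W-S. \<exists>s\<in>S. {u,s} \<in> G)"
  shows "\<exists>vs. distinct vs \<and> set vs = W \<and> ordp G vs"
proof -
  have "\<forall>S vs. card (W - S) = k \<longrightarrow> S \<subseteq> W \<longrightarrow> r \<in> S \<longrightarrow> distinct vs \<longrightarrow> set vs = S \<longrightarrow> ordp G vs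
        \<longrightarrow> (\<exists>ws. distinct ws \<and> set ws = W \<and> ordp G ws)" for k
  proof (induction k)
    case 0
    show ?case
    proof (intro allI impI)
      fix S vs assume h: "card (W - S) = 0" "S \<subseteq> W" "r \<in> S" "distinct vs" "set vs = S" "ordp G vs"
      then have "S = W" using assms(1) by auto
      then show "\<exists>ws. distinct ws \<and> set ws = W \<and> ordp G ws" using h by blast
    qed
  next
    case (Suc k)
    show ?case
    proof (intro allI impI)
      fix S vs assume h: "card (W - S) = Suc k" "S \<subseteq> W" "r \<in> S" "distinct vs" "set vs = S" "ordp G vs"
      then have "S \<noteq> W" by auto
      then obtain u s where us: "u \<in> W - S" "s \<in> S" "{u,s} \<in> G" using cut h by blast
      have "card (W - insert u S) = k" using h us assms(1)
        by (metis Diff_insert card_Diff_singleton diff_Suc_1)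
      moreover have "ordp G (u # vs)" using h us by auto
      moreover have "insert u S \<subseteq> W" "r \<in> insert u S" "distinct (u # vs)" "set (u # vs) = insert u S"
        using h us by auto
      ultimately show "\<exists>ws. distinct ws \<and> set ws = W \<and> ordp G ws"
        using Suc.IH by blast
    qed
  qed
  then have "\<forall>S vs. card (W - S) = card (W - {r}) \<longrightarrow> S \<subseteq> W \<longrightarrow> r \<in> S \<longrightarrow> distinct vs \<longrightarrow> set vs = S \<longrightarrow> ordp G vs
        \<longrightarrow> (\<exists>ws. distinct ws \<and> set ws = W \<and> ordp G ws)" .
  then have "card (W - {r}) = card (W - {r}) \<longrightarrow> {r} \<subseteq> W \<longrightarrow> r \<in> {r} \<longrightarrow> distinct [r] \<longrightarrow> set [r] = {r} \<longrightarrow> ordp G [r]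
        \<longrightarrow> (\<exists>ws. distinct ws \<and> set ws = W \<and> ordp G ws)" by blast
  then show ?thesis using assms(2) by simp
qed

lemma arith_ab: "2 \<le> a \<Longrightarrow> 2 \<le> b \<Longrightarrow> 2*(a+b) \<le> a*b + (4::nat)"
proof -
  assume "2 \<le> a" "2 \<le> b"
  then obtain c d where "a = c + 2" "b = d + 2" by (metis add.commute le_Suc_ex)
  then show ?thesis by (simp add: algebra_simps)
qed


lemma Z_card:
  assumes "finite V" "z \<in> V"
  shows "card ((\<lambda>w. {z,w}) ` (V - {z})) = card V - 1"
proof -
  have "inj_on (\<lambda>w. {z,w}) (V - {z})" by (auto simp: inj_on_def doubleton_eq_iff)
  then show ?thesis using assms by (simp add: card_image)
qed

lemma complete_edges_alt: "complete_edges V = {e. e \<subseteq> V \<and> card e = 2}"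
  unfolding complete_edges_def
proof (intro set_eqI iffI)
  fix e assume "e \<in> {e. \<exists>x y. x \<in> V \<and> y \<in> V \<and> x \<noteq> y \<and> e = {x, y}}"
  then show "e \<in> {e. e \<subseteq> V \<and> card e = 2}" by auto
next
  fix e assume "e \<in> {e. e \<subseteq> V \<and> card e = 2}"
  then have h: "e \<subseteq> V" "card e = 2" by auto
  then obtain x y where "e = {x,y}" "x \<noteq> y" by (meson card_2_iff)
  then show "e \<in> {e. \<exists>x y. x \<in> V \<and> y \<in> V \<and> x \<noteq> y \<and> e = {x, y}}" using h by blast
qed

theorem lemma6:
  fixes V :: "'a set" and A :: "'a set set set" and n :: nat
  assumes "two_admissible n" and "n > 1"
    and "partial_2star_design V A" and "card V = n"
    and "card A = n - 3"
  shows "completable V A"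
proof -
  have evn: "even (n * (n - 1) div 2)" using assms(1) by (simp add: two_admissible_def choose_two)
  have "n \<noteq> 2" using evn by auto
  moreover have "n \<noteq> 3" using evn by auto
  ultimately have n4: "n \<ge> 4" using assms(2) by linarith
  have fV: "finite V" and ed: "edge_disjoint_stars V A"
    using assms(3) by (auto simp: partial_2star_design_def)
  define K where "K = complete_edges V"
  define M where "M = \<Union>A"
  define G where "G = K - M"
  have fK: "finite K" unfolding K_def complete_edges_alt using fV
    by (rule finite_subset[rotated, OF finite_Pow_iff[THEN iffD2]]) auto
  have cardK: "card K = n choose 2" unfolding K_def complete_edges_alt using fV assms(4) n_subsets by blast
  have MK: "M \<subseteq> K" using ed by (auto simp: M_def K_def edge_disjoint_stars_def)
  have fM: "finite M" using MK fK finite_subset by blast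
  have dA: "dstars A" using ed by (auto simp: dstars_def edge_disjoint_stars_def)
  have cardM: "card M = 2 * (n - 3)" using dstars_card[OF dA] fM assms(5) by (simp add: M_def)
  have GK: "G \<subseteq> K" "M \<inter> G = {}" "M \<union> G = K" using MK by (auto simp: G_def)
  have fG: "finite G" using GK fK finite_subset by blast
  have cardG: "card G = card K - card M" unfolding G_def using MK fM by (simp add: card_Diff_subset)
  have "card M \<le> card K" using card_mono[OF fK MK] .
  have evK: "even (card K)" using cardK assms(1) by (simp add: two_admissible_def)
  have evM: "even (card M)" using cardM by simp
  have evG: "even (card G)" unfolding cardG using evK evM by (rule dvd_diff_nat)
  have Kedge: "\<And>e. e \<in> K \<Longrightarrow> \<exists>x y. x \<in> V \<and> y \<in> V \<and> x \<noteq> y \<and> e = {x,y}"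
    by (simp add: K_def complete_edges_def)
  have inK: "\<And>x y. x \<in> V \<Longrightarrow> y \<in> V \<Longrightarrow> x \<noteq> y \<Longrightarrow> {x,y} \<in> K"
    unfolding K_def complete_edges_def by blast
  have key: "\<exists>B'. dstars B' \<and> \<Union>B' = G"
  proof (cases "G = {}")
    case True
    then show ?thesis by (intro exI[of _ "{}"]) (auto simp: dstars_def)
  next
    case False
    define W where "W = {x\<in>V. \<exists>e\<in>G. x \<in> e}"
    have WV: "W \<subseteq> V" by (auto simp: W_def)
    have fW: "finite W" using WV fV finite_subset by blast
    have edges2: "\<forall>e\<in>G. \<exists>x y. x \<noteq> y \<and> e = {x,y}" using Kedge GK(1) by blast
    have Gin: "\<forall>e\<in>G. e \<subseteq> W"
    proof
      fix e assume e: "e \<in> G"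
      then obtain x y where "x \<in> V" "y \<in> V" "e = {x,y}" using Kedge GK(1) by blast
      then show "e \<subseteq> W" using e by (auto simp: W_def)
    qed
    obtain e0 where e0: "e0 \<in> G" using False by blast
    then obtain x0 y0 where xy0: "x0 \<noteq> y0" "e0 = {x0,y0}" using edges2 by blast
    have rW: "x0 \<in> W" using Gin e0 xy0 by blast
    have nonIso: "\<forall>u\<in>W. \<exists>y\<in>W. y \<noteq> u \<and> {u,y} \<in> G"
    proof
      fix u assume "u \<in> W"
      then obtain e where e: "e \<in> G" "u \<in> e" by (auto simp: W_def)
      then obtain x y where xy: "x \<noteq> y" "e = {x,y}" using edges2 by blast
      show "\<exists>y\<in>W. y \<noteq> u \<and> {u,y} \<in> G"
      proof (cases "u = x")
        case True
        then show ?thesis using xy e Gin by (intro bexI[of _ y]) auto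
      next
        case False
        then have "u = y" using xy e by auto
        then show ?thesis using xy e Gin by (intro bexI[of _ x]) (auto simp: insert_commute)
      qed
    qed
    define Z where "Z = (\<lambda>z. (\<lambda>w. {z,w}) ` (V - {z}))"
    have Zsub: "\<And>z. z \<in> V - W \<Longrightarrow> Z z \<subseteq> M"
    proof
      fix z e assume z: "z \<in> V - W" and e: "e \<in> Z z"
      then obtain w where w: "w \<in> V" "w \<noteq> z" "e = {z,w}" by (auto simp: Z_def)
      have "e \<in> K" using inK[of z w] z w by auto
      moreover have "e \<notin> G" using z w by (auto simp: W_def)
      ultimately show "e \<in> M" using GK by blast
    qed
    have Zcard: "\<And>z. z \<in> V \<Longrightarrow> card (Z z) = n - 1"
      unfolding Z_def using Z_card[OF fV] assms(4) by simp
    have fZ: "\<And>z. finite (Z z)" using fV by (simp add: Z_def)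
    have isoc: "card (V - W) \<le> 1"
    proof (rule ccontr)
      assume "\<not> card (V - W) \<le> 1"
      then obtain z1 z2 where z: "z1 \<in> V - W" "z2 \<in> V - W" "z1 \<noteq> z2"
        using card_le_Suc0_iff_eq[of "V - W"] fV by auto
      have sub: "Z z1 \<union> Z z2 \<subseteq> M" using Zsub z by blast
      have "Z z1 \<inter> Z z2 \<subseteq> {{z1,z2}}"
      proof
        fix e assume ee: "e \<in> Z z1 \<inter> Z z2"
        then obtain w where "e = {z1,w}" "w \<noteq> z1" by (auto simp: Z_def)
        moreover obtain w' where "e = {z2,w'}" "w' \<noteq> z2" using ee by (auto simp: Z_def)
        ultimately
        show "e \<in> {{z1,z2}}" using z(3) by (auto simp: doubleton_eq_iff)
      qed
      then have "card (Z z1 \<inter> Z z2) \<le> card {{z1,z2}}" using card_mono[of "{{z1,z2}}"] by simp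
      then have i1: "card (Z z1 \<inter> Z z2) \<le> 1" by simp
      have "card (Z z1 \<union> Z z2) \<le> card M" using card_mono[OF fM sub] .
      moreover have "card (Z z1) + card (Z z2) = card (Z z1 \<union> Z z2) + card (Z z1 \<inter> Z z2)"
        using card_Un_Int fZ by blast
      moreover have "card (Z z1) = n - 1" "card (Z z2) = n - 1" using Zcard z by auto
      ultimately show False using i1 cardM n4 by linarith
    qed
    have cut: "\<forall>S. x0 \<in> S \<and> S \<subseteq> W \<and> S \<noteq> W \<longrightarrow> (\<exists>u\<in>W-S. \<exists>s\<in>S. {u,s} \<in> G)"
    proof (intro allI impI)
      fix S assume hS: "x0 \<in> S \<and> S \<subseteq> W \<and> S \<noteq> W"
      show "\<exists>u\<in>W-S. \<exists>s\<in>S. {u,s} \<in> G"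
      proof (rule ccontr)
        assume no: "\<not> (\<exists>u\<in>W-S. \<exists>s\<in>S. {u,s} \<in> G)"
        have fS: "finite S" using hS fW finite_subset by blast
        have hC: "\<And>u s. u \<in> W - S \<Longrightarrow> s \<in> S \<Longrightarrow> {u,s} \<in> M"
        proof -
          fix u s assume us: "u \<in> W - S" "s \<in> S"
          then have "{u,s} \<in> K" using inK[of u s] hS WV by auto
          moreover have "{u,s} \<notin> G" using no us by blast
          ultimately show "{u,s} \<in> M" using GK by blast
        qed
        have k2: "card S \<ge> 2"
        proof (rule ccontr)
          assume "\<not> card S \<ge> 2"
          then have "card S \<le> Suc 0" by simp
          then have "S = {x0}" using card_le_Suc0_iff_eq[OF fS] hS by blast
          obtain y where y: "y \<in> W" "y \<noteq> x0" "{x0,y} \<in> G" using nonIso rW by blast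
          then have "{y,x0} \<in> M" using hC[of y x0] \<open>S = {x0}\<close> by auto
          then show False using y(3) GK(2) by (auto simp: insert_commute)
        qed
        have k2': "card (W - S) \<ge> 2"
        proof (rule ccontr)
          assume "\<not> card (W - S) \<ge> 2"
          then have "card (W - S) \<le> Suc 0" by simp
          then have all: "\<forall>a\<in>W - S. \<forall>b\<in>W - S. a = b" using card_le_Suc0_iff_eq fW by blast
          obtain u where u: "u \<in> W - S" using hS by blast
          obtain y where y: "y \<in> W" "y \<noteq> u" "{u,y} \<in> G" using nonIso u by blast
          have "y \<in> S" using all u y by blast
          then have "{u,y} \<in> M" using hC u by blast
          then show False using y(3) GK(2) by blast
        qed
        define C where "C = (\<lambda>(u,s). {u,s}) ` ((W - S) \<times> S)"
        have CM: "C \<subseteq> M" using hC by (auto simp: C_def)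
        have "inj_on (\<lambda>(u,s). {u,s}) ((W - S) \<times> S)"
          by (auto simp: inj_on_def doubleton_eq_iff)
        then have cardC: "card C = card (W - S) * card S"
          by (simp add: C_def card_image card_cartesian_product)
        have cW: "card W = card S + card (W - S)"
          using hS fW fS by (simp add: card_Diff_subset card_mono)
        have ab: "2 * card W \<le> card C + 4"
          using arith_ab[OF k2 k2'] cardC cW by (simp add: mult.commute)
        have "card C \<le> card M" using card_mono[OF fM CM] .
        show False
        proof (cases "V - W = {}")
          case True
          then have "W = V" using WV by blast
          then have "card W = n" using assms(4) by simp
          then show False using ab \<open>card C \<le> card M\<close> cardM n4 by linarith
        next
          case False
          then obtain z where z: "z \<in> V - W" by blast
          have "card (V - W) = 1" using isoc False fV by (metis One_nat_def card_0_eq finite_Diff le_SucE le_zero_eq)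
          moreover have "card (V - W) = card V - card W" using WV fW by (simp add: card_Diff_subset)
          moreover have "card W \<le> card V" using card_mono[OF fV WV] .
          ultimately have cW2: "card W = n - 1" using assms(4) by linarith
          have dj: "C \<inter> Z z = {}"
          proof -
            have "\<forall>e\<in>C. z \<notin> e" using z hS by (auto simp: C_def)
            moreover have "\<forall>e\<in>Z z. z \<in> e" by (auto simp: Z_def)
            ultimately show ?thesis by blast
          qed
          have "C \<union> Z z \<subseteq> M" using CM Zsub z by blast
          then have "card (C \<union> Z z) \<le> card M" using card_mono[OF fM] by blast
          moreover have "card (C \<union> Z z) = card C + card (Z z)"
            using dj fZ CM fM finite_subset by (metis card_Un_disjoint)
          moreover have "card (Z z) = n - 1" using Zcard z by blast
          ultimately show False using ab cW2 cardM n4 by linarith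
        qed
      qed
    qed
    obtain vs where vs: "distinct vs" "set vs = W" "ordp G vs"
      using ord_exists[OF fW rW cut] by blast
    have meets: "\<forall>e\<in>G. e \<inter> set vs \<noteq> {}"
    proof
      fix e assume e: "e \<in> G"
      then obtain x y where "e = {x,y}" using edges2 by blast
      then show "e \<inter> set vs \<noteq> {}" using Gin e vs(2) by auto
    qed
    obtain B where B: "dstars B" "\<Union>B \<subseteq> G" "card (G - \<Union>B) \<le> 1"
      using main_decomp[OF vs(1) fG edges2 meets vs(3)] by blast
    have fU: "finite (\<Union>B)" using B(2) fG finite_subset by blast
    have "card (G - \<Union>B) = card G - card (\<Union>B)" using B(2) fU by (simp add: card_Diff_subset)
    moreover have "card (\<Union>B) = 2 * card B" using dstars_card[OF B(1) fU] .
    moreover have "card (\<Union>B) \<le> card G" using card_mono[OF fG B(2)] .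
    ultimately have "card (G - \<Union>B) = card G - 2 * card B" by simp
    then have evL: "even (card (G - \<Union>B))" using evG by (simp add: dvd_diff_nat)
    have "card (G - \<Union>B) = 0 \<or> card (G - \<Union>B) = 1" using B(3) by linarith
    then have "card (G - \<Union>B) = 0" using evL by auto
    then have "G - \<Union>B = {}" using fG by simp
    then have "\<Union>B = G" using B(2) by blast
    then show ?thesis using B(1) by blast
  qed
  then obtain B' where B': "dstars B'" "\<Union>B' = G" by blast
  have dAB: "dstars (A \<union> B')" using dA B' GK(2) by (intro dstars_Un) (auto simp: M_def)
  have "edge_disjoint_stars V (A \<union> B')"
    unfolding edge_disjoint_stars_def
  proof (intro conjI ballI)
    fix S assume S: "S \<in> A \<union> B'"
    show "two_star S" using dAB S by (simp add: dstars_def)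
    have "S \<subseteq> M \<union> G" using S B'(2) by (auto simp: M_def)
    then show "S \<subseteq> complete_edges V" using GK(3) by (simp add: K_def)
  next
    fix S T assume "S \<in> A \<union> B'" "T \<in> A \<union> B'"
    then show "S \<noteq> T \<longrightarrow> S \<inter> T = {}" using dAB by (simp add: dstars_def)
  qed
  moreover have "\<Union>(A \<union> B') = complete_edges V" using B'(2) GK(3) by (auto simp: M_def K_def)
  ultimately show ?thesis unfolding completable_def by blast
qed

end
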